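(* Let $x, y \in \mathbb{R}^n$ with $y \ge 0$, and let $q \colon \mathbb{R}^n \times \mathbb{R}^n \to \mathbb{R}$ be defined by $q(x,y) := |x|^T y = \sum_{i=1}^n |x_i|\, y_i$. Then a vector $v \in \mathbb{R}^{2n}$ belongs to the limiting subdifferential $\partial q(x,y)$ if and only if $$v = \begin{pmatrix} y \circ s \\ |x| \end{pmatrix} \quad\text{for some } s \in \mathbb{R}^n \text{ with } s_i \in \begin{cases} \{1\}, & x_i > 0,\\ [-1,1], & x_i = 0,\\ \{-1\}, & x_i<0,\end{cases} \quad i=1,\dots,n.$$
   Context: $|x| := (|x_1|,\dots,|x_n|)^T$ and $\circ$ denotes the componentwise (Hadamard) product. For a nonempty closed set $Z$, the Fréchet normal cone at $z \in Z$ is the polar of the Bouligand tangent cone $T_Z(z)=\{d : \exists d^k\to d,\ t_k \searrow 0,\ z+t_kd^k \in Z\}$, and the limiting normal cone $N^{\lim}_Z(z)$ is the set of $v$ for which there exist $z^k \to z$ in $Z$ and $v^k \to v$ with $v^k$ in the Fréchet normal cone at $z^k$. For a lower semicontinuous function $h$, the limiting subdifferential is $\partial h(w) := \{ s : (s,-1) \in N^{\lim}_{\mathrm{epi}(h)}((w,h(w)))\}$. *)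

theory Defs
  imports "HOL-Analysis.Analysis"
begin

definition bouligand_tangent_cone :: "'a::real_inner set \<Rightarrow> 'a \<Rightarrow> 'a set" where
  "bouligand_tangent_cone Z z =
     {d. \<exists>dk tk. (dk \<longlonglongrightarrow> d) \<and> (tk \<longlonglongrightarrow> 0) \<and> (\<forall>k. tk k > 0) \<and> decseq tk
               \<and> (\<forall>k. z + tk k *\<^sub>R dk k \<in> Z)}"

definition frechet_normal_cone :: "'a::real_inner set \<Rightarrow> 'a \<Rightarrow> 'a set" where
  "frechet_normal_cone Z z = {v. \<forall>d \<in> bouligand_tangent_cone Z z. inner v d \<le> 0}"

definition limiting_normal_cone :: "'a::real_inner set \<Rightarrow> 'a \<Rightarrow> 'a set" where
  "limiting_normal_cone Z z =
     {v. \<exists>zk vk. (\<forall>k. zk k \<in> Z) \<and> (zk \<longlonglongrightarrow> z) \<and> (vk \<longlonglongrightarrow> v)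
               \<and> (\<forall>k. vk k \<in> frechet_normal_cone Z (zk k))}"

definition epigraph :: "('a \<Rightarrow> real) \<Rightarrow> ('a \<times> real) set" where
  "epigraph h = {(w, t). h w \<le> t}"

definition limiting_subdiff :: "('a::real_inner \<Rightarrow> real) \<Rightarrow> 'a \<Rightarrow> 'a set" where
  "limiting_subdiff h w = {s. (s, -1) \<in> limiting_normal_cone (epigraph h) (w, h w)}"

definition qfun :: "(real^'n) \<times> (real^'n) \<Rightarrow> real" where
  "qfun p = (\<Sum>i\<in>UNIV. \<bar>fst p $ i\<bar> * snd p $ i)"

end

theory Submission
  imports Defs
begin

lemma qfun_diff: "qfun (a', b') - qfun (a, b) = (\<Sum>j\<in>UNIV. \<bar>a' $ j\<bar> * b' $ j - \<bar>a $ j\<bar> * b $ j)"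
  by (simp add: qfun_def sum_subtractf)

lemma qfun_axis1: "qfun (a + axis i c, b) = qfun (a, b) + (\<bar>a $ i + c\<bar> - \<bar>a $ i\<bar>) * b $ i"
proof -
  have "qfun (a + axis i c, b) - qfun (a, b) = (\<Sum>j\<in>UNIV. if j = i then (\<bar>a $ i + c\<bar> - \<bar>a $ i\<bar>) * b $ i else 0)"
    unfolding qfun_diff by (intro sum.cong) (auto simp: axis_def algebra_simps)
  also have "\<dots> = (\<bar>a $ i + c\<bar> - \<bar>a $ i\<bar>) * b $ i" by simp
  finally show ?thesis by linarith
qed

lemma qfun_axis2: "qfun (a, b + axis i c) = qfun (a, b) + \<bar>a $ i\<bar> * c"
proof -
  have "qfun (a, b + axis i c) - qfun (a, b) = (\<Sum>j\<in>UNIV. if j = i then \<bar>a $ i\<bar> * c else 0)"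
    unfolding qfun_diff by (intro sum.cong) (auto simp: axis_def algebra_simps)
  also have "\<dots> = \<bar>a $ i\<bar> * c" by simp
  finally show ?thesis by linarith
qed

lemma tangent_seg:
  assumes "c > 0" "\<And>\<tau>. 0 < \<tau> \<Longrightarrow> \<tau> \<le> c \<Longrightarrow> z + \<tau> *\<^sub>R d \<in> Z"
  shows "d \<in> bouligand_tangent_cone Z z"
proof -
  define tk where "tk = (\<lambda>k::nat. c / real (Suc k))"
  have t0: "tk \<longlonglongrightarrow> 0"
    unfolding tk_def using tendsto_mult_right_zero[OF LIMSEQ_inverse_real_of_nat, of c]
    by (simp add: divide_inverse)
  have tpos: "\<forall>k. tk k > 0" using assms(1) by (simp add: tk_def)
  have tle: "\<And>k. tk k \<le> c" using assms(1) by (simp add: tk_def field_simps)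
  have dec: "decseq tk" unfolding decseq_def tk_def using assms(1)
    by (auto intro!: divide_left_mono)
  show ?thesis unfolding bouligand_tangent_cone_def
    using t0 tpos dec assms(2)[OF _ tle] tpos
    by (intro CollectI exI[of _ "\<lambda>_. d"] exI[of _ tk]) auto
qed

lemma frechet_seg:
  assumes "vn \<in> frechet_normal_cone Z z" "c > 0" "\<And>\<tau>. 0 < \<tau> \<Longrightarrow> \<tau> \<le> c \<Longrightarrow> z + \<tau> *\<^sub>R d \<in> Z"
  shows "inner vn d \<le> 0"
  using assms tangent_seg[of c z d Z] unfolding frechet_normal_cone_def by blast

lemma coord_ineq:
  fixes a a' b b' s :: real
  assumes "b \<ge> 0" "s * a = \<bar>a\<bar>" "\<bar>s\<bar> \<le> 1"
  shows "\<bar>a'\<bar> * b' \<ge> \<bar>a\<bar> * b + b * s * (a' - a) + \<bar>a\<bar> * (b' - b) - \<bar>a' - a\<bar> * \<bar>b' - b\<bar>"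
proof -
  have e: "\<bar>a'\<bar> * b' - (\<bar>a\<bar> * b + b * s * (a' - a) + \<bar>a\<bar> * (b' - b))
     = (\<bar>a'\<bar> - \<bar>a\<bar>) * (b' - b) + b * (\<bar>a'\<bar> - s * a')"
    using assms(2) by (simp add: algebra_simps)
  have 1: "b * (\<bar>a'\<bar> - s * a') \<ge> 0"
  proof -
    have "s * a' \<le> \<bar>s * a'\<bar>" by simp
    also have "\<dots> \<le> \<bar>a'\<bar>" using assms(3) by (simp add: abs_mult mult_left_le_one_le)
    finally show ?thesis using assms(1) by simp
  qed
  have 2: "(\<bar>a'\<bar> - \<bar>a\<bar>) * (b' - b) \<ge> - (\<bar>a' - a\<bar> * \<bar>b' - b\<bar>)"
  proof -
    have "\<bar>(\<bar>a'\<bar> - \<bar>a\<bar>) * (b' - b)\<bar> \<le> \<bar>a' - a\<bar> * \<bar>b' - b\<bar>"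
      unfolding abs_mult by (intro mult_right_mono) auto
    then show ?thesis by linarith
  qed
  show ?thesis using e 1 2 by linarith
qed


lemma qfun_lower:
  fixes x y s A B :: "real^'n" and t :: real
  assumes y: "\<forall>i. y $ i \<ge> 0"
    and s: "\<forall>i. s $ i * x $ i = \<bar>x $ i\<bar> \<and> \<bar>s $ i\<bar> \<le> 1"
  shows "qfun (x + t *\<^sub>R A, y + t *\<^sub>R B) \<ge> qfun (x, y)
     + t * (\<Sum>i\<in>UNIV. y $ i * s $ i * A $ i + \<bar>x $ i\<bar> * B $ i)
     - t * t * (\<Sum>i\<in>UNIV. \<bar>A $ i\<bar> * \<bar>B $ i\<bar>)"
proof -
  have "qfun (x + t *\<^sub>R A, y + t *\<^sub>R B) - qfun (x, y)
     = (\<Sum>i\<in>UNIV. \<bar>x $ i + t * A $ i\<bar> * (y $ i + t * B $ i) - \<bar>x $ i\<bar> * y $ i)"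
    unfolding qfun_diff by simp
  also have "\<dots> \<ge> (\<Sum>i\<in>UNIV. t * (y $ i * s $ i * A $ i + \<bar>x $ i\<bar> * B $ i) - t * t * (\<bar>A $ i\<bar> * \<bar>B $ i\<bar>))"
  proof (intro sum_mono)
    fix i
    have "\<bar>x $ i + t * A $ i\<bar> * (y $ i + t * B $ i) \<ge> \<bar>x $ i\<bar> * y $ i + y $ i * s $ i * ((x $ i + t * A $ i) - x $ i)
       + \<bar>x $ i\<bar> * ((y $ i + t * B $ i) - y $ i) - \<bar>(x $ i + t * A $ i) - x $ i\<bar> * \<bar>(y $ i + t * B $ i) - y $ i\<bar>"
      using y s by (intro coord_ineq) auto
    moreover have "\<bar>(x $ i + t * A $ i) - x $ i\<bar> * \<bar>(y $ i + t * B $ i) - y $ i\<bar> = \<bar>t\<bar> * \<bar>t\<bar> * (\<bar>A $ i\<bar> * \<bar>B $ i\<bar>)"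
      by (simp add: abs_mult)
    moreover have "\<bar>t\<bar> * \<bar>t\<bar> = t * t" by (simp add: abs_mult[symmetric])
    ultimately show "t * (y $ i * s $ i * A $ i + \<bar>x $ i\<bar> * B $ i) - t * t * (\<bar>A $ i\<bar> * \<bar>B $ i\<bar>)
       \<le> \<bar>x $ i + t * A $ i\<bar> * (y $ i + t * B $ i) - \<bar>x $ i\<bar> * y $ i"
      by (simp add: algebra_simps)
  qed
  finally show ?thesis by (simp add: sum_subtractf sum_distrib_left)
qed

lemma backward:
  fixes x y s :: "real^'n"
  assumes y: "\<forall>i. y $ i \<ge> 0"
    and s: "\<forall>i. s $ i * x $ i = \<bar>x $ i\<bar> \<and> \<bar>s $ i\<bar> \<le> 1"
  shows "(((\<chi> i. y $ i * s $ i), (\<chi> i. \<bar>x $ i\<bar>)), -1) \<in> frechet_normal_cone (epigraph qfun) ((x, y), qfun (x, y))"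
  unfolding frechet_normal_cone_def
proof (intro CollectI ballI)
  fix d assume "d \<in> bouligand_tangent_cone (epigraph qfun) ((x, y), qfun (x, y))"
  then obtain dk tk where dk: "dk \<longlonglongrightarrow> d" and tk: "tk \<longlonglongrightarrow> 0" and tpos: "\<forall>k. tk k > 0"
    and mem: "\<forall>k. ((x, y), qfun (x, y)) + tk k *\<^sub>R dk k \<in> epigraph qfun"
    unfolding bouligand_tangent_cone_def by blast
  define A where "A k = fst (fst (dk k))" for k
  define B where "B k = snd (fst (dk k))" for k
  define T where "T k = snd (dk k)" for k
  define L where "L a b = (\<Sum>i\<in>UNIV. y $ i * s $ i * a $ i + \<bar>x $ i\<bar> * b $ i)" for a b :: "real^'n"
  define E where "E a b = (\<Sum>i\<in>UNIV. \<bar>a $ i\<bar> * \<bar>b $ i\<bar>)" for a b :: "real^'n"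
  have ineq: "L (A k) (B k) - tk k * E (A k) (B k) \<le> T k" for k
  proof -
    have "qfun (x + tk k *\<^sub>R A k, y + tk k *\<^sub>R B k) \<le> qfun (x, y) + tk k * T k"
    proof -
      obtain a b t where e: "dk k = ((a, b), t)" by (metis prod.collapse)
      show ?thesis using mem[rule_format, of k] by (simp add: epigraph_def A_def B_def T_def e)
    qed
    moreover have "qfun (x + tk k *\<^sub>R A k, y + tk k *\<^sub>R B k) \<ge> qfun (x, y) + tk k * L (A k) (B k) - tk k * tk k * E (A k) (B k)"
      unfolding L_def E_def by (rule qfun_lower[OF y s])
    ultimately have "tk k * (L (A k) (B k) - tk k * E (A k) (B k)) \<le> tk k * T k"
      by (simp add: algebra_simps)
    then show ?thesis using tpos by simp
  qed
  have lA: "A \<longlonglongrightarrow> fst (fst d)" unfolding A_def by (intro tendsto_intros dk)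
  have lB: "B \<longlonglongrightarrow> snd (fst d)" unfolding B_def by (intro tendsto_intros dk)
  have lT: "T \<longlonglongrightarrow> snd d" unfolding T_def by (intro tendsto_intros dk)
  have lL: "(\<lambda>k. L (A k) (B k)) \<longlonglongrightarrow> L (fst (fst d)) (snd (fst d))"
    unfolding L_def by (intro tendsto_intros lA lB)
  have lE: "(\<lambda>k. E (A k) (B k)) \<longlonglongrightarrow> E (fst (fst d)) (snd (fst d))"
    unfolding E_def by (intro tendsto_intros lA lB)
  have "(\<lambda>k. L (A k) (B k) - tk k * E (A k) (B k)) \<longlonglongrightarrow> L (fst (fst d)) (snd (fst d)) - 0 * E (fst (fst d)) (snd (fst d))"
    by (intro tendsto_intros lL lE tk)
  then have "L (fst (fst d)) (snd (fst d)) \<le> snd d"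
    using LIMSEQ_le[OF _ lT] ineq by auto
  moreover have "inner (((\<chi> i. y $ i * s $ i), (\<chi> i. \<bar>x $ i\<bar>)), -1) d = L (fst (fst d)) (snd (fst d)) - snd d"
    by (cases d) (auto simp: L_def inner_vec_def sum.distrib)
  ultimately show "inner (((\<chi> i. y $ i * s $ i), (\<chi> i. \<bar>x $ i\<bar>)), -1) d \<le> 0" by simp
qed


lemma scale_axis: "(\<tau>::real) *\<^sub>R axis i (c::real) = axis i (\<tau> * c)"
  by (simp add: vec_eq_iff axis_def)

lemma point_facts:
  fixes a b G H :: "real^'n" and t r :: real
  assumes ep: "qfun (a, b) \<le> t"
    and fn: "((G, H), r) \<in> frechet_normal_cone (epigraph qfun) ((a, b), t)"
  shows "G $ i + r * \<bar>b $ i\<bar> \<le> 0" "- G $ i + r * \<bar>b $ i\<bar> \<le> 0"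
    "H $ i + r * \<bar>a $ i\<bar> = 0"
    "a $ i > 0 \<Longrightarrow> - G $ i - r * b $ i \<le> 0"
    "a $ i < 0 \<Longrightarrow> G $ i - r * b $ i \<le> 0"
proof -
  have P1: "\<sigma> * G $ i + r * \<bar>b $ i\<bar> \<le> 0" if sg: "\<bar>\<sigma>\<bar> = 1" for \<sigma> :: real
  proof -
    have "inner ((G, H), r) ((axis i \<sigma>, 0), \<bar>b $ i\<bar>) \<le> 0"
    proof (rule frechet_seg[OF fn, of 1])
      fix \<tau> :: real assume "0 < \<tau>" "\<tau> \<le> 1"
      have "\<bar>\<bar>a $ i + \<tau> * \<sigma>\<bar> - \<bar>a $ i\<bar>\<bar> \<le> \<tau>"
      proof -
        have "\<bar>\<tau> * \<sigma>\<bar> = \<tau>" using sg \<open>0 < \<tau>\<close> by (simp add: abs_mult)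
        moreover have "\<bar>\<bar>a $ i + \<tau> * \<sigma>\<bar> - \<bar>a $ i\<bar>\<bar> \<le> \<bar>(a $ i + \<tau> * \<sigma>) - a $ i\<bar>"
          by (rule abs_triangle_ineq3)
        ultimately show ?thesis by simp
      qed
      then have "(\<bar>a $ i + \<tau> * \<sigma>\<bar> - \<bar>a $ i\<bar>) * b $ i \<le> \<tau> * \<bar>b $ i\<bar>"
      proof -
        have "(\<bar>a $ i + \<tau> * \<sigma>\<bar> - \<bar>a $ i\<bar>) * b $ i \<le> \<bar>\<bar>a $ i + \<tau> * \<sigma>\<bar> - \<bar>a $ i\<bar>\<bar> * \<bar>b $ i\<bar>"
          by (metis abs_ge_self abs_mult)
        also have "\<dots> \<le> \<tau> * \<bar>b $ i\<bar>" by (rule mult_right_mono) (fact, simp)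
        finally show ?thesis .
      qed
      then show "((a, b), t) + \<tau> *\<^sub>R ((axis i \<sigma>, 0), \<bar>b $ i\<bar>) \<in> epigraph qfun"
        using ep by (simp add: epigraph_def scale_axis qfun_axis1)
    qed simp
    then show ?thesis by (simp add: inner_axis mult.commute)
  qed
  show "G $ i + r * \<bar>b $ i\<bar> \<le> 0" using P1[of 1] by simp
  show "- G $ i + r * \<bar>b $ i\<bar> \<le> 0" using P1[of "-1"] by simp
  have P2: "\<sigma> * H $ i + r * (\<sigma> * \<bar>a $ i\<bar>) \<le> 0" for \<sigma> :: real
  proof -
    have "inner ((G, H), r) ((0, axis i \<sigma>), \<sigma> * \<bar>a $ i\<bar>) \<le> 0"
    proof (rule frechet_seg[OF fn, of 1])
      fix \<tau> :: real assume "0 < \<tau>" "\<tau> \<le> 1"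
      show "((a, b), t) + \<tau> *\<^sub>R ((0, axis i \<sigma>), \<sigma> * \<bar>a $ i\<bar>) \<in> epigraph qfun"
        using ep by (simp add: epigraph_def scale_axis qfun_axis2 algebra_simps)
    qed simp
    then show ?thesis by (simp add: inner_axis mult.commute)
  qed
  show "H $ i + r * \<bar>a $ i\<bar> = 0" using P2[of 1] P2[of "-1"] by simp
  show "- G $ i - r * b $ i \<le> 0" if ai: "a $ i > 0"
  proof -
    have "inner ((G, H), r) ((axis i (-1), 0), - b $ i) \<le> 0"
    proof (rule frechet_seg[OF fn, of "a $ i"])
      fix \<tau> :: real assume "0 < \<tau>" "\<tau> \<le> a $ i"
      then have "\<bar>a $ i + \<tau> * -1\<bar> - \<bar>a $ i\<bar> = - \<tau>" by simp
      then show "((a, b), t) + \<tau> *\<^sub>R ((axis i (-1), 0), - b $ i) \<in> epigraph qfun"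
        using ep by (simp add: epigraph_def scale_axis qfun_axis1 del: mult_minus1_right)
    qed (use ai in simp)
    then show ?thesis by (simp add: inner_axis mult.commute)
  qed
  show "G $ i - r * b $ i \<le> 0" if ai: "a $ i < 0"
  proof -
    have "inner ((G, H), r) ((axis i 1, 0), - b $ i) \<le> 0"
    proof (rule frechet_seg[OF fn, of "- a $ i"])
      fix \<tau> :: real assume "0 < \<tau>" "\<tau> \<le> - a $ i"
      then have "\<bar>a $ i + \<tau> * 1\<bar> - \<bar>a $ i\<bar> = - \<tau>" by simp
      then show "((a, b), t) + \<tau> *\<^sub>R ((axis i 1, 0), - b $ i) \<in> epigraph qfun"
        using ep by (simp add: epigraph_def scale_axis qfun_axis1 del: mult_1_right)
    qed (use ai in simp)
    then show ?thesis by (simp add: inner_axis mult.commute)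
  qed
qed


lemma forward:
  fixes x y :: "real^'n" and v :: "(real^'n) \<times> (real^'n)"
  assumes y: "\<forall>i. y $ i \<ge> 0" and v: "v \<in> limiting_subdiff qfun (x, y)"
  shows "snd v $ i = \<bar>x $ i\<bar>" "\<bar>fst v $ i\<bar> \<le> y $ i"
    "x $ i > 0 \<Longrightarrow> fst v $ i \<ge> y $ i" "x $ i < 0 \<Longrightarrow> fst v $ i \<le> - y $ i"
proof -
  obtain zk vk where zin: "\<forall>k. zk k \<in> epigraph qfun" and zl: "zk \<longlonglongrightarrow> ((x, y), qfun (x, y))"
    and vl: "vk \<longlonglongrightarrow> (v, -1)" and fn: "\<forall>k. vk k \<in> frechet_normal_cone (epigraph qfun) (zk k)"
    using v unfolding limiting_subdiff_def limiting_normal_cone_def by blast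
  define a where "a k = fst (fst (zk k))" for k
  define b where "b k = snd (fst (zk k))" for k
  define t where "t k = snd (zk k)" for k
  define G where "G k = fst (fst (vk k))" for k
  define H where "H k = snd (fst (vk k))" for k
  define r where "r k = snd (vk k)" for k
  have ze: "zk k = ((a k, b k), t k)" for k by (simp add: a_def b_def t_def)
  have ve: "vk k = ((G k, H k), r k)" for k by (simp add: G_def H_def r_def)
  have ep: "qfun (a k, b k) \<le> t k" for k using zin[rule_format, of k] by (simp add: ze epigraph_def)
  have fn': "((G k, H k), r k) \<in> frechet_normal_cone (epigraph qfun) ((a k, b k), t k)" for k
    using fn[rule_format, of k] by (simp add: ze ve)
  note pf = point_facts[OF ep fn', of _ i]
  have la: "(\<lambda>k. a k $ i) \<longlonglongrightarrow> x $ i"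
  proof -
    have "(\<lambda>k. fst (fst (zk k))) \<longlonglongrightarrow> fst (fst ((x, y), qfun (x, y)))" using tendsto_fst[OF tendsto_fst[OF zl]] by simp
    then show ?thesis unfolding a_def by (simp add: tendsto_vec_nth)
  qed
  have lb: "(\<lambda>k. b k $ i) \<longlonglongrightarrow> y $ i"
  proof -
    have "(\<lambda>k. snd (fst (zk k))) \<longlonglongrightarrow> snd (fst ((x, y), qfun (x, y)))" using tendsto_snd[OF tendsto_fst[OF zl]] by simp
    then show ?thesis unfolding b_def by (simp add: tendsto_vec_nth)
  qed
  have lG: "(\<lambda>k. G k $ i) \<longlonglongrightarrow> fst v $ i"
  proof -
    have "(\<lambda>k. fst (fst (vk k))) \<longlonglongrightarrow> fst (fst (v, -1::real))" using tendsto_fst[OF tendsto_fst[OF vl]] by simp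
    then show ?thesis unfolding G_def by (simp add: tendsto_vec_nth)
  qed
  have lH: "(\<lambda>k. H k $ i) \<longlonglongrightarrow> snd v $ i"
  proof -
    have "(\<lambda>k. snd (fst (vk k))) \<longlonglongrightarrow> snd (fst (v, -1::real))" using tendsto_snd[OF tendsto_fst[OF vl]] by simp
    then show ?thesis unfolding H_def by (simp add: tendsto_vec_nth)
  qed
  have lr: "r \<longlonglongrightarrow> -1"
  proof -
    have "(\<lambda>k. snd (vk k)) \<longlonglongrightarrow> snd (v, -1::real)" by (intro tendsto_intros vl)
    then show ?thesis unfolding r_def by simp
  qed
  have "(\<lambda>k. H k $ i + r k * \<bar>a k $ i\<bar>) \<longlonglongrightarrow> snd v $ i + (-1) * \<bar>x $ i\<bar>"
    by (intro tendsto_intros lH lr la)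
  moreover have "(\<lambda>k. H k $ i + r k * \<bar>a k $ i\<bar>) = (\<lambda>k. 0)" using pf(3) by auto
  ultimately have "snd v $ i + (-1) * \<bar>x $ i\<bar> = 0" using LIMSEQ_unique by fastforce
  then show "snd v $ i = \<bar>x $ i\<bar>" by simp
  have l1: "(\<lambda>k. G k $ i + r k * \<bar>b k $ i\<bar>) \<longlonglongrightarrow> fst v $ i + (-1) * \<bar>y $ i\<bar>"
    by (intro tendsto_intros lG lr lb)
  have "fst v $ i + (-1) * \<bar>y $ i\<bar> \<le> 0"
    by (rule tendsto_upperbound[OF l1]) (use pf(1) in auto)
  moreover have l2: "(\<lambda>k. - G k $ i + r k * \<bar>b k $ i\<bar>) \<longlonglongrightarrow> - fst v $ i + (-1) * \<bar>y $ i\<bar>"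
    by (intro tendsto_intros lG lr lb)
  have "- fst v $ i + (-1) * \<bar>y $ i\<bar> \<le> 0"
    by (rule tendsto_upperbound[OF l2]) (use pf(2) in auto)
  ultimately show "\<bar>fst v $ i\<bar> \<le> y $ i" using y by auto
  show "fst v $ i \<ge> y $ i" if xi: "x $ i > 0"
  proof -
    have ev: "eventually (\<lambda>k. 0 < a k $ i) sequentially" using order_tendstoD(1)[OF la xi] .
    have l3: "(\<lambda>k. - G k $ i - r k * b k $ i) \<longlonglongrightarrow> - fst v $ i - (-1) * y $ i"
      by (intro tendsto_intros lG lr lb)
    have "- fst v $ i - (-1) * y $ i \<le> 0"
      by (rule tendsto_upperbound[OF l3]) (use ev pf(4) in \<open>auto elim: eventually_mono\<close>)
    then show ?thesis by simp
  qed
  show "fst v $ i \<le> - y $ i" if xi: "x $ i < 0"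
  proof -
    have ev: "eventually (\<lambda>k. a k $ i < 0) sequentially" using order_tendstoD(2)[OF la xi] .
    have l3: "(\<lambda>k. G k $ i - r k * b k $ i) \<longlonglongrightarrow> fst v $ i - (-1) * y $ i"
      by (intro tendsto_intros lG lr lb)
    have "fst v $ i - (-1) * y $ i \<le> 0"
      by (rule tendsto_upperbound[OF l3]) (use ev pf(5) in \<open>auto elim: eventually_mono\<close>)
    then show ?thesis by simp
  qed
qed

theorem mainTheorem1:
  fixes x y :: "real^'n" and v :: "(real^'n) \<times> (real^'n)"
  assumes "\<forall>i. y $ i \<ge> 0"
  shows "v \<in> limiting_subdiff qfun (x, y) \<longleftrightarrow>
    (\<exists>s :: real^'n.
       (\<forall>i. (x $ i > 0 \<longrightarrow> s $ i = 1) \<and> (x $ i = 0 \<longrightarrow> s $ i \<in> {-1..1})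
            \<and> (x $ i < 0 \<longrightarrow> s $ i = -1))
       \<and> v = ((\<chi> i. y $ i * s $ i), (\<chi> i. \<bar>x $ i\<bar>)))"
proof
  assume v: "v \<in> limiting_subdiff qfun (x, y)"
  note F = forward[OF assms v]
  define s :: "real^'n" where "s = (\<chi> i. if x $ i > 0 then 1 else if x $ i < 0 then -1
       else if y $ i = 0 then 0 else fst v $ i / y $ i)"
  show "\<exists>s :: real^'n.
       (\<forall>i. (x $ i > 0 \<longrightarrow> s $ i = 1) \<and> (x $ i = 0 \<longrightarrow> s $ i \<in> {-1..1})
            \<and> (x $ i < 0 \<longrightarrow> s $ i = -1))
       \<and> v = ((\<chi> i. y $ i * s $ i), (\<chi> i. \<bar>x $ i\<bar>))"
  proof (intro exI[of _ s] conjI allI impI)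
    fix i
    show "x $ i > 0 \<Longrightarrow> s $ i = 1" "x $ i < 0 \<Longrightarrow> s $ i = -1" by (auto simp: s_def)
    show "s $ i \<in> {-1..1}" if "x $ i = 0"
    proof -
      have b: "\<bar>fst v $ i\<bar> \<le> y $ i" by (rule F(2))
      show ?thesis
      proof (cases "y $ i = 0")
        case True then show ?thesis using that by (simp add: s_def)
      next
        case False
        then have yp: "y $ i > 0" using assms[rule_format, of i] by simp
        have "\<bar>fst v $ i / y $ i\<bar> \<le> 1" using b yp by (metis abs_divide abs_of_pos pos_divide_le_eq mult_1)
        moreover have e: "s $ i = fst v $ i / y $ i" using that False by (simp add: s_def)
        ultimately show ?thesis by (simp only: atLeastAtMost_iff e, arith)
      qed
    qed
  next
    show "v = ((\<chi> i. y $ i * s $ i), (\<chi> i. \<bar>x $ i\<bar>))"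
    proof (rule prod_eqI)
      show "snd v = snd ((\<chi> i. y $ i * s $ i), (\<chi> i. \<bar>x $ i\<bar>))"
        using F(1) by (simp add: vec_eq_iff)
      show "fst v = fst ((\<chi> i. y $ i * s $ i), (\<chi> i. \<bar>x $ i\<bar>))"
      proof (simp add: vec_eq_iff, intro allI)
        fix i
        have b: "\<bar>fst v $ i\<bar> \<le> y $ i" by (rule F(2))
        show "fst v $ i = y $ i * s $ i"
        proof (cases "x $ i > 0")
          case True then show ?thesis using F(3)[of i] b by (simp add: s_def)
        next
          case f1: False
          show ?thesis
          proof (cases "x $ i < 0")
            case True then show ?thesis using F(4)[of i] b by (simp add: s_def)
          next
            case False then show ?thesis using f1 b by (auto simp: s_def)
          qed
        qed
      qed
    qed
  qed
next
  assume "\<exists>s :: real^'n.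
       (\<forall>i. (x $ i > 0 \<longrightarrow> s $ i = 1) \<and> (x $ i = 0 \<longrightarrow> s $ i \<in> {-1..1})
            \<and> (x $ i < 0 \<longrightarrow> s $ i = -1))
       \<and> v = ((\<chi> i. y $ i * s $ i), (\<chi> i. \<bar>x $ i\<bar>))"
  then obtain s :: "real^'n" where sc: "\<forall>i. (x $ i > 0 \<longrightarrow> s $ i = 1) \<and> (x $ i = 0 \<longrightarrow> s $ i \<in> {-1..1})
            \<and> (x $ i < 0 \<longrightarrow> s $ i = -1)" and ve: "v = ((\<chi> i. y $ i * s $ i), (\<chi> i. \<bar>x $ i\<bar>))"
    by blast
  have s': "\<forall>i. s $ i * x $ i = \<bar>x $ i\<bar> \<and> \<bar>s $ i\<bar> \<le> 1"
  proof
    fix i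
    show "s $ i * x $ i = \<bar>x $ i\<bar> \<and> \<bar>s $ i\<bar> \<le> 1"
      using sc[rule_format, of i] by (cases "x $ i > 0"; cases "x $ i < 0") auto
  qed
  have fn: "(v, -1) \<in> frechet_normal_cone (epigraph qfun) ((x, y), qfun (x, y))"
    using backward[OF assms s'] ve by simp
  show "v \<in> limiting_subdiff qfun (x, y)"
    unfolding limiting_subdiff_def limiting_normal_cone_def
    using fn by (intro CollectI exI[of _ "\<lambda>_. ((x, y), qfun (x, y))"] exI[of _ "\<lambda>_. (v, -1)"])
      (auto simp: epigraph_def)
qed

end
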